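(* Let $T\in\mathcal M_n$, and let $f,g:[0,\infty)\to[0,\infty)$ be continuous with $f(t)g(t)=t$ for all $t\ge0$. Then \[\|T\|\le\frac12\left(\Big\|\frac{f^2(|T|)+g^2(|T^*|)}{2}+\mathfrak RT\Big\|+\Big\|\frac{f^2(|T|)+g^2(|T^*|)}{2}-\mathfrak RT\Big\|\right).\] In particular, $\|T\|\le\frac14\big(\||T|+|T^*|+2\mathfrak RT\|+\||T|+|T^*|-2\mathfrak RT\|\big)$.
   Context: $\mathcal M_n$ denotes the algebra of $n\times n$ complex matrices; $\|\cdot\|$ is the operator (spectral) norm. $|X|=(X^*X)^{1/2}$; functions of positive semidefinite matrices are defined by functional calculus. $\mathfrak RT=\frac{T+T^*}{2}$. *)

theory Defs
  imports "HOL-Analysis.Analysis"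
begin

text \<open>n x n complex matrices are modelled as complex ^'n ^'n for a finite index type 'n.\<close>

definition cadj :: "complex^'n^'n \<Rightarrow> complex^'n^'n" where
  "cadj A = (\<chi> i j. cnj (A $ j $ i))"

definition unitary_mat :: "complex^'n^'n \<Rightarrow> bool" where
  "unitary_mat U \<longleftrightarrow> cadj U ** U = mat 1"

definition rdiag :: "('n \<Rightarrow> real) \<Rightarrow> complex^'n^'n" where
  "rdiag d = (\<chi> i j. if i = j then complex_of_real (d i) else 0)"

text \<open>Functional calculus for Hermitian matrices: if A = U diag(d) U* with U unitary and
  d real, then f(A) = U diag(f o d) U*. (Well defined for Hermitian A.)\<close>
definition mfun :: "(real \<Rightarrow> real) \<Rightarrow> complex^'n^'n \<Rightarrow> complex^'n^'n" where
  "mfun f A = (SOME B. \<exists>U d. unitary_mat U \<and> A = U ** rdiag d ** cadj U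
                         \<and> B = U ** rdiag (f \<circ> d) ** cadj U)"

definition mabs :: "complex^'n^'n \<Rightarrow> complex^'n^'n" where
  "mabs X = mfun sqrt (cadj X ** X)"

definition opnorm :: "complex^'n^'n \<Rightarrow> real" where
  "opnorm A = onorm (\<lambda>x. A *v x)"

definition ReM :: "complex^'n^'n \<Rightarrow> complex^'n^'n" where
  "ReM T = scaleR (1/2) (T + cadj T)"

end

theory Submission
  imports Defs
begin


definition cinner :: "complex^'n \<Rightarrow> complex^'n \<Rightarrow> complex" where
  "cinner x y = (\<Sum>i\<in>UNIV. cnj (x$i) * y$i)"

lemma Re_cinner: "Re (cinner x y) = inner x y"
  by (simp add: cinner_def inner_vec_def inner_complex_def Re_sum)

lemma cinner_adj: "cinner x (A *v y) = cinner (cadj A *v x) y"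
proof -
  have "cinner x (A *v y) = (\<Sum>i\<in>UNIV. \<Sum>j\<in>UNIV. cnj (x$i) * A$i$j * y$j)"
    unfolding cinner_def matrix_vector_mult_def by (simp add: sum_distrib_left mult_ac)
  also have "\<dots> = (\<Sum>j\<in>UNIV. \<Sum>i\<in>UNIV. cnj (x$i) * A$i$j * y$j)"
    by (rule sum.swap)
  also have "\<dots> = cinner (cadj A *v x) y"
    unfolding cinner_def matrix_vector_mult_def cadj_def by (simp add: sum_distrib_left mult_ac)
  finally show ?thesis .
qed

lemma cadj_mult: "cadj (A ** B) = cadj B ** cadj A"
  by (simp add: cadj_def matrix_matrix_mult_def vec_eq_iff mult.commute)

lemma cadj_cadj[simp]: "cadj (cadj A) = A"
  by (simp add: cadj_def vec_eq_iff)

lemma cadj_add: "cadj (A + B) = cadj A + cadj B"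
  by (simp add: cadj_def vec_eq_iff)

lemma cadj_diff: "cadj (A - B) = cadj A - cadj B"
  by (simp add: cadj_def vec_eq_iff)

lemma cadj_scaleR: "cadj (c *\<^sub>R A) = c *\<^sub>R cadj A"
  by (simp add: cadj_def vec_eq_iff)

lemma cadj_rdiag[simp]: "cadj (rdiag d) = rdiag d"
  by (simp add: cadj_def rdiag_def vec_eq_iff)

lemma cadj_mat1[simp]: "cadj (mat 1) = (mat 1 :: complex^'n^'n)"
  by (simp add: cadj_def mat_def vec_eq_iff)

lemma unitary_right: "unitary_mat U \<Longrightarrow> U ** cadj U = mat 1"
  unfolding unitary_mat_def using matrix_left_right_inverse by blast

lemma unitary_adj: "unitary_mat U \<Longrightarrow> unitary_mat (cadj U)"
  unfolding unitary_mat_def using unitary_right[unfolded unitary_mat_def] by simp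

lemma if0_mult: "(if P then x else 0) * y = (if P then x * y else (0::complex))"
  by simp
lemma mult_if0: "y * (if P then x else 0) = (if P then y * x else (0::complex))"
  by simp

lemma rdiag_mult: "rdiag a ** rdiag b = rdiag (\<lambda>i. a i * b i)"
  unfolding rdiag_def matrix_matrix_mult_def
  by (simp add: vec_eq_iff if0_mult sum.delta)

lemma rdiag_mv: "(rdiag a *v x) $ i = of_real (a i) * x $ i"
  unfolding rdiag_def matrix_vector_mult_def
  by (simp add: if0_mult sum.delta)

lemma mv_add: "A *v (x + y) = A *v x + A *v (y::complex^'n)"
  by (simp add: matrix_vector_mult_def vec_eq_iff distrib_left sum.distrib)
lemma mv_diff: "A *v (x - y) = A *v x - A *v (y::complex^'n)"
  by (simp add: matrix_vector_mult_def vec_eq_iff right_diff_distrib sum_subtractf)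
lemma mv_scaleR: "A *v (c *\<^sub>R x) = c *\<^sub>R (A *v (x::complex^'n))"
  by (simp add: matrix_vector_mult_def vec_eq_iff scaleR_sum_right)
lemma mv_scale: "A *v (c *s x) = c *s (A *v (x::complex^'n))"
  by (simp add: matrix_vector_mult_def vec_eq_iff sum_distrib_left mult_ac)
lemma add_mv: "(A + B) *v x = A *v x + B *v (x::complex^'n)"
  by (simp add: matrix_vector_mult_def vec_eq_iff distrib_right sum.distrib)
lemma diff_mv: "(A - B) *v x = A *v x - B *v (x::complex^'n)"
  by (simp add: matrix_vector_mult_def vec_eq_iff left_diff_distrib sum_subtractf)
lemma scaleR_mv: "(c *\<^sub>R A) *v x = c *\<^sub>R (A *v (x::complex^'n))"
  by (simp add: matrix_vector_mult_def vec_eq_iff scaleR_sum_right)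

lemma mv_linear: "bounded_linear (\<lambda>x. A *v (x::complex^'n))"
proof -
  have "linear (\<lambda>x. A *v (x::complex^'n))"
    by (rule linearI) (simp_all add: mv_add mv_scaleR)
  thus ?thesis by (simp add: linear_conv_bounded_linear)
qed

lemma opnorm_bound: "norm (A *v x) \<le> opnorm A * norm x"
  unfolding opnorm_def using onorm[OF mv_linear] by blast

lemma opnorm_le: "(\<And>x. norm (A *v x) \<le> b * norm x) \<Longrightarrow> opnorm A \<le> b"
  unfolding opnorm_def by (rule onorm_le)

lemma norm_sq_cinner: "(norm x)^2 = Re (cinner x x)"
  by (simp add: Re_cinner power2_norm_eq_inner)

lemma unitary_norm: "unitary_mat U \<Longrightarrow> norm (U *v x) = norm x"
proof -
  assume u: "unitary_mat U"
  have "(norm (U *v x))^2 = (norm x)^2"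
    unfolding norm_sq_cinner cinner_adj using u
    by (simp add: unitary_mat_def matrix_vector_mul_assoc)
  thus ?thesis by (simp add: power2_eq_iff_nonneg)
qed



lemma rdiag_mm: "(rdiag d ** W) $ i $ j = of_real (d i) * W $ i $ j"
  unfolding rdiag_def matrix_matrix_mult_def by (simp add: if0_mult sum.delta)

lemma mm_rdiag: "(W ** rdiag d) $ i $ j = W $ i $ j * of_real (d j)"
  unfolding rdiag_def matrix_matrix_mult_def by (simp add: mult_if0 sum.delta')

lemma mfun_wd:
  assumes U: "unitary_mat U" and V: "unitary_mat V"
    and eq: "U ** rdiag d ** cadj U = V ** rdiag e ** cadj V"
  shows "U ** rdiag (h \<circ> d) ** cadj U = V ** rdiag (h \<circ> e) ** cadj V"
proof -
  define W where "W = cadj U ** V"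
  have UU: "cadj U ** U = mat 1" and VV: "cadj V ** V = mat 1"
    using U V unfolding unitary_mat_def by auto
  have UU': "U ** cadj U = mat 1" and VV': "V ** cadj V = mat 1"
    using U V unitary_right by auto
  have "cadj U ** (U ** rdiag d ** cadj U) ** V = cadj U ** (V ** rdiag e ** cadj V) ** V"
    using eq by simp
  hence 1: "rdiag d ** W = W ** rdiag e"
    unfolding W_def by (simp add: matrix_mul_assoc UU VV)
       (metis UU VV matrix_mul_assoc matrix_mul_lid matrix_mul_rid)
  have 2: "rdiag (h \<circ> d) ** W = W ** rdiag (h \<circ> e)"
  proof -
    { fix i j
      have "of_real (d i) * W $ i $ j = W $ i $ j * of_real (e j)"
        using 1 by (metis rdiag_mm mm_rdiag)
      hence "W $ i $ j = 0 \<or> d i = e j" by (simp add: mult.commute)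
      hence "of_real (h (d i)) * W $ i $ j = W $ i $ j * of_real (h (e j))" by auto }
    thus ?thesis by (simp add: vec_eq_iff rdiag_mm mm_rdiag)
  qed
  have "U ** rdiag (h \<circ> d) ** cadj U = U ** rdiag (h \<circ> d) ** (W ** cadj V)"
    unfolding W_def by (metis VV' matrix_mul_assoc matrix_mul_rid)
  also have "\<dots> = U ** (rdiag (h \<circ> d) ** W) ** cadj V" by (simp add: matrix_mul_assoc)
  also have "\<dots> = U ** W ** rdiag (h \<circ> e) ** cadj V" using 2 by (simp add: matrix_mul_assoc)
  also have "\<dots> = V ** rdiag (h \<circ> e) ** cadj V"
    unfolding W_def by (simp add: matrix_mul_assoc UU')
  finally show ?thesis .
qed

lemma mfun_eq:
  assumes U: "unitary_mat U" and A: "A = U ** rdiag d ** cadj U"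
  shows "mfun h A = U ** rdiag (h \<circ> d) ** cadj U"
proof -
  let ?P = "\<lambda>B. \<exists>U d. unitary_mat U \<and> A = U ** rdiag d ** cadj U \<and> B = U ** rdiag (h \<circ> d) ** cadj U"
  have "?P (U ** rdiag (h \<circ> d) ** cadj U)" using U A by blast
  hence "?P (mfun h A)" unfolding mfun_def by (rule someI)
  then obtain U' d' where "unitary_mat U'" "A = U' ** rdiag d' ** cadj U'"
    "mfun h A = U' ** rdiag (h \<circ> d') ** cadj U'" by blast
  thus ?thesis using mfun_wd[OF U, of U' d d' h] A by simp
qed

lemma herm_decomp_adj: "cadj (U ** rdiag d ** cadj U) = U ** rdiag d ** cadj U"
  by (simp add: cadj_mult matrix_mul_assoc)



lemma cinner_add_right: "cinner x (y + z) = cinner x y + cinner x z"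
  by (simp add: cinner_def distrib_left sum.distrib)
lemma cinner_add_left: "cinner (x + y) z = cinner x z + cinner y z"
  by (simp add: cinner_def distrib_right sum.distrib)
lemma cinner_diff_right: "cinner x (y - z) = cinner x y - cinner x z"
  by (simp add: cinner_def right_diff_distrib sum_subtractf)
lemma cinner_diff_left: "cinner (x - y) z = cinner x z - cinner y z"
  by (simp add: cinner_def left_diff_distrib sum_subtractf)
lemma cinner_scale_right: "cinner x (c *s y) = c * cinner x y"
  by (simp add: cinner_def sum_distrib_left mult_ac)
lemma cinner_scale_left: "cinner (c *s x) y = cnj c * cinner x y"
  by (simp add: cinner_def sum_distrib_left mult_ac)
lemma vec_scaleR_eq: "c *\<^sub>R (y::complex^'n) = of_real c *s y"
  unfolding vec_eq_iff by (simp only: vector_scaleR_component) (simp add: scaleR_conv_of_real)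
lemma cinner_scaleR_right: "cinner x (c *\<^sub>R y) = of_real c * cinner x y"
  by (simp add: vec_scaleR_eq cinner_scale_right)
lemma cinner_scaleR_left: "cinner (c *\<^sub>R x) y = of_real c * cinner x y"
  by (simp add: vec_scaleR_eq cinner_scale_left)
lemma cinner_cnj: "cnj (cinner x y) = cinner y x"
  by (simp add: cinner_def mult.commute)
lemma cinner_zero_left[simp]: "cinner 0 y = 0" by (simp add: cinner_def)
lemma cinner_zero_right[simp]: "cinner x 0 = 0" by (simp add: cinner_def)

lemma cinner_self: "cinner x x = of_real ((norm x)^2)"
proof -
  have "Im (cinner x x) = 0" by (simp add: cinner_def Im_sum)
  moreover have "Re (cinner x x) = (norm x)^2" by (simp add: norm_sq_cinner)
  ultimately show ?thesis by (simp add: complex_eq_iff)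
qed

lemma cinner_self_eq0: "cinner x x = 0 \<longleftrightarrow> x = 0"
  by (simp add: cinner_self)

lemma Im_cinner: "Im (cinner x y) = inner (\<i> *s x) y"
proof -
  have "Re (cinner (\<i> *s x) y) = Im (cinner x y)" by (simp add: cinner_scale_left)
  thus ?thesis by (simp add: Re_cinner)
qed

lemma herm_cinner: "cadj H = H \<Longrightarrow> cinner x (H *v y) = cinner (H *v x) y"
  by (metis cinner_adj)



lemma quad_zero:
  fixes a b :: real
  assumes "\<And>t. a*t + b*t^2 \<le> 0" shows "a = 0"
proof (rule ccontr)
  assume a: "a \<noteq> 0"
  define c where "c = \<bar>b\<bar> + 1"
  have c: "c > 0" "c \<ge> \<bar>b\<bar>" unfolding c_def by auto
  define t where "t = a / (2*c)"
  have "a*t + b*t^2 \<le> 0" by (rule assms)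
  moreover have "a*t + b*t^2 = a^2/(4*c^2) * (2*c + b)"
    unfolding t_def using c by (simp add: field_simps power2_eq_square)
  moreover have "a^2/(4*c^2) > 0" using a c by simp
  moreover have "2*c + b > 0" using c by linarith
  ultimately show False by (metis mult_pos_pos not_le)
qed

lemma max_eigen:
  fixes H :: "complex^'n^'n" and E :: "(complex^'n) set"
  assumes herm: "cadj H = H"
    and eig: "\<And>v. v \<in> E \<Longrightarrow> \<exists>\<mu>::real. H *v v = of_real \<mu> *s v"
    and fin: "finite E"
    and nz: "x1 \<in> {x. \<forall>v\<in>E. cinner v x = 0}" "x1 \<noteq> 0"
  shows "\<exists>x (l::real). (\<forall>v\<in>E. cinner v x = 0) \<and> norm x = 1 \<and> H *v x = of_real l *s x"
proof -
  define S where "S = {x. \<forall>v\<in>E. cinner v x = 0}"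
  have S_eq: "S = (\<Inter>v\<in>E. {x. inner v x = 0} \<inter> {x. inner (\<i> *s v) x = 0})"
    unfolding S_def by (auto simp: complex_eq_iff Re_cinner[symmetric] cinner_scale_left)
  have "closed S" unfolding S_eq
    by (intro closed_INT ballI closed_Int closed_hyperplane)
  hence cK: "compact (S \<inter> sphere 0 1)" by (simp add: closed_Int_compact compact_sphere)
  have Sadd: "x + y \<in> S" if "x \<in> S" "y \<in> S" for x y
    using that by (simp add: S_def cinner_add_right)
  have Sdiff: "x - y \<in> S" if "x \<in> S" "y \<in> S" for x y
    using that by (simp add: S_def cinner_diff_right)
  have Sscale: "c *\<^sub>R x \<in> S" if "x \<in> S" for x c
    using that by (simp add: S_def cinner_scaleR_right)
  have x1S: "x1 \<in> S" using nz S_def by simp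
  have "(1 / norm x1) *\<^sub>R x1 \<in> S \<inter> sphere 0 1" using Sscale[OF x1S] nz(2) by simp
  hence ne: "S \<inter> sphere 0 1 \<noteq> {}" by blast
  define q where "q x = inner x (H *v x)" for x
  have "continuous_on UNIV (\<lambda>x. H *v x)"
    using mv_linear linear_continuous_on by blast
  hence "continuous_on (S \<inter> sphere 0 1) q"
    unfolding q_def by (intro continuous_intros)
  then obtain x0 where x0: "x0 \<in> S \<inter> sphere 0 1" and mx: "\<And>y. y \<in> S \<inter> sphere 0 1 \<Longrightarrow> q y \<le> q x0"
    using continuous_attains_sup[OF cK ne] by blast
  define l where "l = q x0"
  have nx0: "norm x0 = 1" using x0 by simp
  have qscale: "q (c *\<^sub>R y) = c^2 * q y" for c y
    unfolding q_def by (simp add: mv_scaleR power2_eq_square)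
  have bound: "q y \<le> l * (norm y)^2" if "y \<in> S" for y
  proof (cases "y = 0")
    case True thus ?thesis by (simp add: q_def)
  next
    case False
    have "(1/norm y) *\<^sub>R y \<in> S \<inter> sphere 0 1" using Sscale[OF that] False by simp
    hence "q ((1/norm y) *\<^sub>R y) \<le> l" using mx l_def by blast
    hence "q y / (norm y)^2 \<le> l" by (simp add: qscale power_divide)
    thus ?thesis using False by (simp add: field_simps)
  qed
  have hsym: "inner x (H *v y) = inner y (H *v x)" for x y
    by (metis Re_cinner herm_cinner[OF herm] inner_commute)
  define w where "w = H *v x0 - l *\<^sub>R x0"
  have orth: "inner y w = 0" if yS: "y \<in> S" for y
  proof -
    have "(2 * inner y w) * t + (q y - l * (norm y)^2) * t^2 \<le> 0" for t
    proof -
      have "x0 + t *\<^sub>R y \<in> S" using x0 yS Sadd Sscale by blast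
      hence "q (x0 + t *\<^sub>R y) \<le> l * (norm (x0 + t *\<^sub>R y))^2" by (rule bound)
      moreover have "q (x0 + t *\<^sub>R y) = l + 2 * t * inner y (H *v x0) + t^2 * q y"
        unfolding q_def l_def using hsym[of x0 y]
        by (simp add: mv_add mv_scaleR inner_add_left inner_add_right algebra_simps power2_eq_square)
      moreover have "(norm (x0 + t *\<^sub>R y))^2 = 1 + 2 * t * inner y x0 + t^2 * (norm y)^2"
      proof -
        have "(norm (x0 + t *\<^sub>R y))^2 = inner (x0 + t *\<^sub>R y) (x0 + t *\<^sub>R y)"
          by (rule power2_norm_eq_inner)
        also have "\<dots> = inner x0 x0 + 2 * t * inner y x0 + t^2 * inner y y"
          by (simp add: inner_add_left inner_add_right inner_commute[of x0 y] algebra_simps power2_eq_square)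
        finally show ?thesis using nx0 by (simp add: power2_norm_eq_inner[symmetric])
      qed
      ultimately show ?thesis unfolding w_def
        by (simp add: inner_diff_right algebra_simps)
    qed
    from quad_zero[OF this] show ?thesis by simp
  qed
  have wS: "w \<in> S"
  proof -
    have "H *v x0 \<in> S" unfolding S_def mem_Collect_eq
    proof
      fix v assume v: "v \<in> E"
      then obtain \<mu> :: real where mu: "H *v v = of_real \<mu> *s v" using eig by blast
      have "cinner v (H *v x0) = cinner (H *v v) x0" by (rule herm_cinner[OF herm])
      also have "\<dots> = 0" using mu v x0 by (simp add: cinner_scale_left S_def)
      finally show "cinner v (H *v x0) = 0" .
    qed
    thus ?thesis unfolding w_def using x0 Sdiff Sscale by blast
  qed
  have "w = 0" using orth[OF wS] by simp
  hence "H *v x0 = of_real l *s x0" unfolding w_def by (simp add: vec_scaleR_eq)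
  thus ?thesis using x0 nx0 S_def by blast
qed



lemma cinner_sum_right: "cinner x (\<Sum>i\<in>A. f i) = (\<Sum>i\<in>A. cinner x (f i))"
  by (induction A rule: infinite_finite_induct) (auto simp: cinner_add_right)

lemma complement_nonzero:
  fixes e :: "'n::finite \<Rightarrow> complex^'n"
  assumes on: "\<forall>i\<in>A. \<forall>j\<in>A. cinner (e i) (e j) = (if i = j then 1 else 0)"
    and card: "card A < CARD('n)"
  shows "\<exists>x. (\<forall>v\<in>e ` A. cinner v x = 0) \<and> x \<noteq> 0"
proof (rule ccontr)
  assume "\<not> ?thesis"
  hence zero: "\<And>x. (\<forall>i\<in>A. cinner (e i) x = 0) \<Longrightarrow> x = 0" by blast
  define E where "E = e ` A \<union> (\<lambda>i. \<i> *s e i) ` A"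
  have finA: "finite A" by simp
  have "UNIV \<subseteq> span E"
  proof
    fix y :: "complex^'n"
    define p where "p = (\<Sum>i\<in>A. cinner (e i) y *s e i)"
    have "cinner (e j) (y - p) = 0" if j: "j \<in> A" for j
    proof -
      have "cinner (e j) p = (\<Sum>i\<in>A. cinner (e i) y * (if j = i then 1 else 0))"
        unfolding p_def cinner_sum_right using on j by (simp add: cinner_scale_right)
      also have "\<dots> = cinner (e j) y" using j finA by (simp add: mult_if0 sum.delta)
      finally show ?thesis by (simp add: cinner_diff_right)
    qed
    hence "y = p" using zero by force
    moreover have "cinner (e i) y *s e i \<in> span E" if "i \<in> A" for i
    proof -
      have "cinner (e i) y *s e i = Re (cinner (e i) y) *\<^sub>R e i + Im (cinner (e i) y) *\<^sub>R (\<i> *s e i)"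
        by (simp add: vec_scaleR_eq vec_eq_iff complex_eq_iff)
      moreover have "e i \<in> span E" "\<i> *s e i \<in> span E" using that unfolding E_def
        by (auto intro: span_base)
      ultimately show ?thesis by (simp add: span_add span_scale)
    qed
    ultimately show "y \<in> span E" unfolding p_def by (metis (mono_tags, lifting) span_sum)
  qed
  moreover have "finite E" unfolding E_def using finA by blast
  ultimately have "dim (UNIV :: (complex^'n) set) \<le> card E" by (rule dim_le_card)
  moreover have "card E \<le> card A + card A"
  proof -
    have "card E \<le> card (e ` A) + card ((\<lambda>i. \<i> *s e i) ` A)" unfolding E_def by (rule card_Un_le)
    moreover have "card (e ` A) \<le> card A" using finA by (rule card_image_le)
    moreover have "card ((\<lambda>i. \<i> *s e i) ` A) \<le> card A" using finA by (rule card_image_le)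
    ultimately show ?thesis by linarith
  qed
  moreover have "dim (UNIV :: (complex^'n) set) = 2 * CARD('n)" by simp
  ultimately show False using card by linarith
qed

lemma spectral_fam:
  fixes H :: "complex^'n^'n" and A :: "'n set"
  assumes herm: "cadj H = H"
  shows "\<exists>e d. (\<forall>i\<in>A. \<forall>j\<in>A. cinner (e i) (e j) = (if i = j then 1 else 0))
              \<and> (\<forall>i\<in>A. H *v e i = of_real (d i) *s e i)"
proof (induction A rule: infinite_finite_induct)
  case (infinite A) thus ?case by simp
next
  case empty thus ?case by simp
next
  case (insert a A)
  then obtain e d where on: "\<forall>i\<in>A. \<forall>j\<in>A. cinner (e i) (e j) = (if i = j then 1 else 0)"
    and ev: "\<forall>i\<in>A. H *v e i = of_real (d i) *s e i" by blast
  have "card (insert a A) \<le> CARD('n)" by (rule card_mono) auto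
  hence "card A < CARD('n)" using insert by simp
  then obtain x1 where x1: "\<forall>v\<in>e ` A. cinner v x1 = 0" "x1 \<noteq> 0"
    using complement_nonzero[OF on] by blast
  have "\<exists>x (l::real). (\<forall>v\<in>e ` A. cinner v x = 0) \<and> norm x = 1 \<and> H *v x = of_real l *s x"
    by (rule max_eigen[OF herm _ _ _ x1(2)]) (use ev x1(1) in auto)
  then obtain x l where x: "\<forall>v\<in>e ` A. cinner v x = 0" "norm x = 1" "H *v x = of_real l *s x"
    by blast
  define e' where "e' = e(a := x)"
  define d' where "d' = d(a := l)"
  have "\<forall>i\<in>insert a A. \<forall>j\<in>insert a A. cinner (e' i) (e' j) = (if i = j then 1 else 0)"
  proof (intro ballI)
    fix i j assume i: "i \<in> insert a A" and j: "j \<in> insert a A"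
    have xx: "cinner x x = 1" using x(2) by (simp add: cinner_self)
    have xi: "cinner (e k) x = 0" "cinner x (e k) = 0" if "k \<in> A" for k
      using x(1) that cinner_cnj[of "e k" x] by auto
    show "cinner (e' i) (e' j) = (if i = j then 1 else 0)"
      using i j on xx xi insert.hyps(2) unfolding e'_def by (cases "i = a"; cases "j = a") auto
  qed
  moreover have "\<forall>i\<in>insert a A. H *v e' i = of_real (d' i) *s e' i"
    using ev x(3) insert.hyps(2) unfolding e'_def d'_def by auto
  ultimately show ?case by blast
qed

lemma spectral:
  fixes H :: "complex^'n^'n"
  assumes herm: "cadj H = H"
  shows "\<exists>U d. unitary_mat U \<and> H = U ** rdiag d ** cadj U"
proof -
  obtain e :: "'n \<Rightarrow> complex^'n" and d :: "'n \<Rightarrow> real" where on: "\<forall>i j. cinner (e i) (e j) = (if i = j then 1 else 0)"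
    and ev: "\<forall>i. H *v e i = of_real (d i) *s e i"
    using spectral_fam[OF herm, where A=UNIV] by blast
  define U :: "complex^'n^'n" where "U = (\<chi> i j. e j $ i)"
  have u: "unitary_mat U"
    unfolding unitary_mat_def
  proof -
    have "(cadj U ** U) $ i $ j = cinner (e i) (e j)" for i j
      by (simp add: U_def cadj_def matrix_matrix_mult_def cinner_def)
    thus "cadj U ** U = mat 1" using on by (simp add: vec_eq_iff mat_def)
  qed
  have "H ** U = U ** rdiag d"
  proof -
    have "(H ** U) $ i $ j = (H *v e j) $ i" for i j
      by (simp add: U_def matrix_matrix_mult_def matrix_vector_mult_def)
    moreover have "(U ** rdiag d) $ i $ j = (of_real (d j) *s e j) $ i" for i j
      by (simp add: mm_rdiag U_def mult.commute)
    ultimately show ?thesis using ev by (simp add: vec_eq_iff)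
  qed
  hence "H = U ** rdiag d ** cadj U"
    using unitary_right[OF u] by (metis matrix_mul_assoc matrix_mul_rid)
  thus ?thesis using u by blast
qed



lemma cnj_mult_self: "cnj z * z = of_real ((cmod z)^2)"
  by (metis complex_norm_square mult.commute of_real_power)

lemma rdiag_one: "rdiag (\<lambda>i. 1) = mat 1"
  by (simp add: rdiag_def mat_def vec_eq_iff)

lemma cinner_rdiag: "cinner x (rdiag w *v x) = of_real (\<Sum>i\<in>UNIV. w i * (cmod (x$i))^2)"
proof -
  have "cinner x (rdiag w *v x) = (\<Sum>i\<in>UNIV. of_real (w i) * (cnj (x$i) * x$i))"
    by (simp add: cinner_def rdiag_mv mult_ac)
  also have "\<dots> = (\<Sum>i\<in>UNIV. of_real (w i * (cmod (x$i))^2))"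
    by (simp add: cnj_mult_self)
  finally show ?thesis by simp
qed

lemma norm_rdiag_sq: "(norm (rdiag w *v x))^2 = (\<Sum>i\<in>UNIV. (w i)^2 * (cmod (x$i))^2)"
proof -
  have "(norm (rdiag w *v x))^2 = Re (cinner x (rdiag w *v (rdiag w *v x)))"
    unfolding norm_sq_cinner cinner_adj by simp
  also have "\<dots> = Re (cinner x (rdiag (\<lambda>i. w i * w i) *v x))"
    by (simp add: matrix_vector_mul_assoc rdiag_mult)
  finally show ?thesis by (simp add: cinner_rdiag power2_eq_square)
qed

lemma core_ineq:
  fixes M :: "complex^'n^'n" and d :: "'n \<Rightarrow> real" and F G :: "'n \<Rightarrow> real"
  assumes MM: "cadj M ** M = rdiag d"
    and FG: "\<And>i j. M$j$i \<noteq> 0 \<Longrightarrow> F i * G j = sqrt (d i)"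
  shows "2 * Re (cinner b (M *v a)) \<le> (\<Sum>i\<in>UNIV. (F i)^2 * (cmod (a$i))^2) + (\<Sum>j\<in>UNIV. (G j)^2 * (cmod (b$j))^2)"
proof -
  define c where "c i = (if d i > 0 then 1 / sqrt (d i) else 0)" for i
  define N where "N = M ** rdiag c"
  have col: "d i = (\<Sum>j\<in>UNIV. (cmod (M$j$i))^2)" for i
  proof -
    have "of_real (d i) = (cadj M ** M) $ i $ i" using MM by (simp add: rdiag_def)
    also have "\<dots> = (\<Sum>j\<in>UNIV. cnj (M$j$i) * M$j$i)"
      by (simp add: cadj_def matrix_matrix_mult_def)
    also have "\<dots> = of_real (\<Sum>j\<in>UNIV. (cmod (M$j$i))^2)"
      by (simp add: cnj_mult_self)
    finally show ?thesis by (simp only: of_real_eq_iff)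
  qed
  have dpos: "d i > 0" if "M$j$i \<noteq> 0" for i j
  proof -
    have "(cmod (M$j$i))^2 \<le> (\<Sum>j\<in>UNIV. (cmod (M$j$i))^2)"
      by (rule member_le_sum) auto
    moreover have "(cmod (M$j$i))^2 > 0" using that by simp
    ultimately show ?thesis using col[of i] by linarith
  qed
  have Meq: "M = rdiag G ** N ** rdiag F"
  proof -
    have "M$j$i = (rdiag G ** N ** rdiag F)$j$i" for i j
    proof (cases "M$j$i = 0")
      case True thus ?thesis by (simp add: N_def rdiag_mm mm_rdiag)
    next
      case False
      have "of_real (G j) * (M$j$i * of_real (c i)) * of_real (F i)
            = M$j$i * of_real (F i * G j * c i)" by (simp add: mult_ac)
      also have "F i * G j * c i = 1"
        using FG[OF False] dpos[OF False] by (simp add: c_def)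
      finally show ?thesis by (simp add: N_def rdiag_mm mm_rdiag)
    qed
    thus ?thesis by (simp add: vec_eq_iff)
  qed
  define \<alpha> where "\<alpha> = rdiag F *v a"
  define \<beta> where "\<beta> = rdiag G *v b"
  have "cinner b (M *v a) = cinner \<beta> (N *v \<alpha>)"
    unfolding Meq \<alpha>_def \<beta>_def
    by (simp add: cinner_adj matrix_vector_mul_assoc[symmetric])
  hence "Re (cinner b (M *v a)) = inner \<beta> (N *v \<alpha>)" by (simp add: Re_cinner)
  moreover have "2 * inner \<beta> (N *v \<alpha>) \<le> (norm \<beta>)^2 + (norm (N *v \<alpha>))^2"
  proof -
    have "0 \<le> (norm (\<beta> - N *v \<alpha>))^2" by simp
    also have "\<dots> = (norm \<beta>)^2 - 2 * inner \<beta> (N *v \<alpha>) + (norm (N *v \<alpha>))^2"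
      by (simp add: power2_norm_eq_inner inner_diff_left inner_diff_right inner_commute)
    finally show ?thesis by simp
  qed
  moreover have "(norm (N *v \<alpha>))^2 \<le> (norm \<alpha>)^2"
  proof -
    have NN: "cadj N ** N = rdiag (\<lambda>i. if d i > 0 then 1 else 0)"
    proof -
      have "cadj N ** N = rdiag c ** (cadj M ** M) ** rdiag c"
        by (simp add: N_def cadj_mult matrix_mul_assoc)
      also have "\<dots> = rdiag (\<lambda>i. c i * d i * c i)" by (simp add: MM rdiag_mult)
      also have "(\<lambda>i. c i * d i * c i) = (\<lambda>i. if d i > 0 then 1 else 0)"
        by (auto simp: c_def fun_eq_iff)
      finally show ?thesis .
    qed
    have "(norm (N *v \<alpha>))^2 = Re (cinner \<alpha> ((cadj N ** N) *v \<alpha>))"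
      by (simp add: norm_sq_cinner matrix_vector_mul_assoc[symmetric] cinner_adj[of \<alpha> "cadj N"])
    also have "\<dots> = (\<Sum>i\<in>UNIV. (if d i > 0 then 1 else 0) * (cmod (\<alpha>$i))^2)"
      unfolding NN cinner_rdiag by simp
    also have "\<dots> \<le> (\<Sum>i\<in>UNIV. (cmod (\<alpha>$i))^2)"
      by (rule sum_mono) auto
    also have "\<dots> = (norm \<alpha>)^2"
      using norm_rdiag_sq[of "\<lambda>i. 1" \<alpha>] by (simp add: rdiag_one)
    finally show ?thesis .
  qed
  moreover have "(norm \<alpha>)^2 = (\<Sum>i\<in>UNIV. (F i)^2 * (cmod (a$i))^2)"
    unfolding \<alpha>_def by (rule norm_rdiag_sq)
  moreover have "(norm \<beta>)^2 = (\<Sum>j\<in>UNIV. (G j)^2 * (cmod (b$j))^2)"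
    unfolding \<beta>_def by (rule norm_rdiag_sq)
  ultimately show ?thesis by linarith
qed



lemma psd_decomp:
  fixes X :: "complex^'n^'n"
  shows "\<exists>V d. unitary_mat V \<and> cadj X ** X = V ** rdiag d ** cadj V \<and> (\<forall>i. d i \<ge> 0)"
proof -
  have "cadj (cadj X ** X) = cadj X ** X" by (simp add: cadj_mult)
  then obtain V d where V: "unitary_mat V" and H: "cadj X ** X = V ** rdiag d ** cadj V"
    using spectral by blast
  have VV: "cadj V ** V = mat 1" using V unitary_mat_def by auto
  have RD: "rdiag d = cadj (X ** V) ** (X ** V)"
  proof -
    have "cadj (X ** V) ** (X ** V) = cadj V ** (cadj X ** X) ** V"
      by (simp add: cadj_mult matrix_mul_assoc)
    also have "\<dots> = (cadj V ** V) ** rdiag d ** (cadj V ** V)"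
      unfolding H by (simp add: matrix_mul_assoc)
    finally show ?thesis by (simp add: VV)
  qed
  have "d i \<ge> 0" for i
  proof -
    have "of_real (d i) = (cadj (X ** V) ** (X ** V)) $ i $ i" using RD[symmetric] by (simp add: rdiag_def)
    also have "\<dots> = (\<Sum>j\<in>UNIV. cnj ((X ** V)$j$i) * (X ** V)$j$i)"
      by (simp add: cadj_def matrix_matrix_mult_def)
    also have "\<dots> = of_real (\<Sum>j\<in>UNIV. (cmod ((X ** V)$j$i))^2)"
      by (simp add: cnj_mult_self)
    finally have "d i = (\<Sum>j\<in>UNIV. (cmod ((X ** V)$j$i))^2)" by (simp only: of_real_eq_iff)
    thus ?thesis by (simp add: sum_nonneg)
  qed
  thus ?thesis using V H by blast
qed

lemma unitary_cancel: "unitary_mat V \<Longrightarrow> cadj V ** (V ** X) = X"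
  unfolding unitary_mat_def by (simp add: matrix_mul_assoc)
lemma unitary_cancel': "unitary_mat V \<Longrightarrow> V ** (cadj V ** X) = X"
  by (simp add: matrix_mul_assoc unitary_right)

lemma cinner_conj_decomp:
  assumes V: "unitary_mat V"
  shows "cinner v ((V ** rdiag w ** cadj V) *v v) = of_real (\<Sum>i\<in>UNIV. w i * (cmod ((cadj V *v v)$i))^2)"
proof -
  have "cinner v ((V ** rdiag w ** cadj V) *v v) = cinner v (V *v (rdiag w *v (cadj V *v v)))"
    by (simp add: matrix_vector_mul_assoc matrix_mul_assoc)
  also have "\<dots> = cinner (cadj V *v v) (rdiag w *v (cadj V *v v))" by (rule cinner_adj)
  finally show ?thesis by (simp add: cinner_rdiag)
qed

lemma mixed_schwarz:
  fixes T :: "complex^'n^'n" and f g :: "real \<Rightarrow> real"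
  assumes fg: "\<And>t. t \<ge> 0 \<Longrightarrow> f t * g t = t"
  shows "2 * Re (cinner u (T *v v)) \<le> Re (cinner v (mfun (\<lambda>t. (f t)^2) (mabs T) *v v))
                                     + Re (cinner u (mfun (\<lambda>t. (g t)^2) (mabs (cadj T)) *v u))"
proof -
  obtain V d where V: "unitary_mat V" and HV: "cadj T ** T = V ** rdiag d ** cadj V"
    and d: "\<forall>i. d i \<ge> 0" using psd_decomp by blast
  obtain W e where W: "unitary_mat W" and HW: "cadj (cadj T) ** cadj T = W ** rdiag e ** cadj W"
    and e: "\<forall>i. e i \<ge> 0" using psd_decomp by blast
  have HW': "T ** cadj T = W ** rdiag e ** cadj W" using HW by simp
  have mA: "mabs T = V ** rdiag (sqrt \<circ> d) ** cadj V"
    unfolding mabs_def using mfun_eq[OF V HV] .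
  have A: "mfun (\<lambda>t. (f t)^2) (mabs T) = V ** rdiag ((\<lambda>t. (f t)^2) \<circ> (sqrt \<circ> d)) ** cadj V"
    using mfun_eq[OF V mA] .
  have mB: "mabs (cadj T) = W ** rdiag (sqrt \<circ> e) ** cadj W"
    unfolding mabs_def using mfun_eq[OF W HW] .
  have B: "mfun (\<lambda>t. (g t)^2) (mabs (cadj T)) = W ** rdiag ((\<lambda>t. (g t)^2) \<circ> (sqrt \<circ> e)) ** cadj W"
    using mfun_eq[OF W mB] .
  define M where "M = cadj W ** T ** V"
  have VV: "cadj V ** V = mat 1" and WW: "cadj W ** W = mat 1" using V W unitary_mat_def by auto
  have VV': "V ** cadj V = mat 1" and WW': "W ** cadj W = mat 1" using V W unitary_right by auto
  have MM: "cadj M ** M = rdiag d"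
  proof -
    have "cadj M ** M = cadj V ** (cadj T ** (W ** cadj W) ** T) ** V"
      by (simp add: M_def cadj_mult matrix_mul_assoc)
    also have "\<dots> = (cadj V ** V) ** rdiag d ** (cadj V ** V)"
      by (simp add: WW' HV matrix_mul_assoc)
    finally show ?thesis by (simp add: VV)
  qed
  have MM': "M ** cadj M = rdiag e"
  proof -
    have "M ** cadj M = cadj W ** (T ** (V ** cadj V) ** cadj T) ** W"
      by (simp add: M_def cadj_mult matrix_mul_assoc)
    also have "\<dots> = (cadj W ** W) ** rdiag e ** (cadj W ** W)"
      by (simp add: VV' HW' matrix_mul_assoc)
    finally show ?thesis by (simp add: WW)
  qed
  have comm: "M ** rdiag d = rdiag e ** M"
    by (metis MM MM' matrix_mul_assoc)
  define F where "F i = f (sqrt (d i))" for i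
  define G where "G j = g (sqrt (e j))" for j
  have FG: "F i * G j = sqrt (d i)" if nz: "M$j$i \<noteq> 0" for i j
  proof -
    have "M$j$i * of_real (d i) = of_real (e j) * M$j$i"
      using comm by (metis mm_rdiag rdiag_mm)
    hence "d i = e j" using nz by (simp add: mult.commute)
    thus ?thesis using fg[of "sqrt (d i)"] d[rule_format, of i] by (simp add: F_def G_def)
  qed
  define a where "a = cadj V *v v"
  define b where "b = cadj W *v u"
  have "T = W ** M ** cadj V"
    by (simp add: M_def matrix_mul_assoc WW' VV')
       (metis VV' WW' matrix_mul_assoc matrix_mul_lid matrix_mul_rid)
  hence "cinner u (T *v v) = cinner u (W *v (M *v a))"
    by (simp add: a_def matrix_vector_mul_assoc matrix_mul_assoc)
  also have "\<dots> = cinner b (M *v a)" unfolding b_def by (rule cinner_adj)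
  finally have 1: "cinner u (T *v v) = cinner b (M *v a)" .
  have 2: "Re (cinner v (mfun (\<lambda>t. (f t)^2) (mabs T) *v v)) = (\<Sum>i\<in>UNIV. (F i)^2 * (cmod (a$i))^2)"
    unfolding A cinner_conj_decomp[OF V] by (simp add: F_def a_def)
  have 3: "Re (cinner u (mfun (\<lambda>t. (g t)^2) (mabs (cadj T)) *v u)) = (\<Sum>j\<in>UNIV. (G j)^2 * (cmod (b$j))^2)"
    unfolding B cinner_conj_decomp[OF W] by (simp add: G_def b_def)
  show ?thesis unfolding 1 2 3 by (rule core_ineq[OF MM FG])
qed



definition sf :: "complex^'n^'n \<Rightarrow> complex^'n \<Rightarrow> complex^'n \<Rightarrow> real" where
  "sf M x y = inner x (M *v y)"

lemma sf_add_l: "sf M (x + y) z = sf M x z + sf M y z" by (simp add: sf_def inner_add_left)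
lemma sf_diff_l: "sf M (x - y) z = sf M x z - sf M y z" by (simp add: sf_def inner_diff_left)
lemma sf_scale_l: "sf M (c *\<^sub>R x) z = c * sf M x z" by (simp add: sf_def)
lemma sf_add_r: "sf M z (x + y) = sf M z x + sf M z y" by (simp add: sf_def mv_add inner_add_right)
lemma sf_diff_r: "sf M z (x - y) = sf M z x - sf M z y" by (simp add: sf_def mv_diff inner_diff_right)
lemma sf_scale_r: "sf M z (c *\<^sub>R x) = c * sf M z x" by (simp add: sf_def mv_scaleR)
lemma sf_addM: "sf (M + N) x y = sf M x y + sf N x y" by (simp add: sf_def add_mv inner_add_right)
lemma sf_diffM: "sf (M - N) x y = sf M x y - sf N x y" by (simp add: sf_def diff_mv inner_diff_right)
lemma sf_scaleM: "sf (c *\<^sub>R M) x y = c * sf M x y" by (simp add: sf_def scaleR_mv)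
lemma sf_adj: "sf (cadj M) x y = sf M y x"
proof -
  have "sf (cadj M) x y = Re (cinner (M *v x) y)"
    by (simp add: sf_def Re_cinner[symmetric] cinner_adj)
  also have "\<dots> = Re (cinner y (M *v x))" by (metis cnj.sel(1) cinner_cnj)
  finally show ?thesis by (simp add: sf_def Re_cinner)
qed

lemmas sf_lin = sf_add_l sf_diff_l sf_scale_l sf_add_r sf_diff_r sf_scale_r sf_addM sf_diffM sf_scaleM sf_adj

lemma key_identity:
  fixes A B T :: "complex^'n^'n" and p q :: "complex^'n" and r :: real
  assumes hA: "\<And>x y. sf A x y = sf A y x" and hB: "\<And>x y. sf B x y = sf B y x"
    and r: "r \<noteq> 0"
  defines "\<Phi> \<equiv> \<lambda>v u. sf A v v + sf B u u + 2 * sf T u v"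
  defines "X \<equiv> (1/2) *\<^sub>R (A + B) + ReM T" and "Y \<equiv> (1/2) *\<^sub>R (A + B) - ReM T"
  shows "\<Phi> ((1/2) *\<^sub>R (p + q)) ((1/2) *\<^sub>R (p - q))
        + \<Phi> ((1/2) *\<^sub>R (r *\<^sub>R p - (1/r) *\<^sub>R q)) ((1/2) *\<^sub>R (r *\<^sub>R p + (1/r) *\<^sub>R q))
       = (1/2) * (1 + r^2) * sf X p p + (1/2) * (1 + 1/r^2) * sf Y q q"
proof -
  have a: "sf A q p = sf A p q" by (rule hA)
  have b: "sf B q p = sf B p q" by (rule hB)
  show ?thesis
    unfolding \<Phi>_def X_def Y_def ReM_def
    using r by (simp add: sf_lin a b field_simps power2_eq_square) (simp add: algebra_simps)?
qed



lemma sqrt_amgm: fixes a b :: real assumes "a \<ge> 0" "b \<ge> 0" shows "2 * sqrt (a * b) \<le> a + b"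
proof -
  have "0 \<le> (sqrt a - sqrt b)^2" by simp
  also have "\<dots> = a + b - 2 * sqrt (a * b)"
    using assms by (simp add: power2_eq_square algebra_simps real_sqrt_mult)
      (metis real_sqrt_mult_self)?
  finally show ?thesis by simp
qed

lemma RL:
  fixes K a b :: real
  assumes a: "a \<ge> 0" and b: "b \<ge> 0" and h: "\<And>\<rho>. \<rho> > 0 \<Longrightarrow> K \<le> (1 + \<rho>) * a + (1 + 1/\<rho>) * b"
  shows "K \<le> a + b + 2 * sqrt (a * b)"
proof (cases "a > 0 \<and> b > 0")
  case True
  define \<rho> where "\<rho> = sqrt b / sqrt a"
  have rp: "\<rho> > 0" using True by (simp add: \<rho>_def)
  have "(1 + \<rho>) * a + (1 + 1/\<rho>) * b = a + b + \<rho> * a + b / \<rho>" by (simp add: algebra_simps)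
  also have "\<rho> * a = sqrt a * sqrt b" using True unfolding \<rho>_def
    by (simp add: field_simps) (metis real_sqrt_pow2 less_imp_le power2_eq_square)?
  also have "b / \<rho> = sqrt a * sqrt b" using True unfolding \<rho>_def
    by (simp add: field_simps) (metis real_sqrt_pow2 less_imp_le power2_eq_square)?
  finally show ?thesis using h[OF rp] by (simp add: real_sqrt_mult)
next
  case False
  hence z: "a = 0 \<or> b = 0" using a b by linarith
  show ?thesis
  proof (rule ccontr)
    assume "\<not> ?thesis"
    hence K: "K > a + b" using z by auto
    show False
    proof (cases "a = 0")
      case True
      define \<rho> where "\<rho> = 2 * (b + 1) / (K - b)"
      have rp: "\<rho> > 0" using K True b by (simp add: \<rho>_def)
      have "(1 + 1/\<rho>) * b = b + b * (K - b) / (2 * (b + 1))" using K True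
        by (simp add: \<rho>_def field_simps)
      also have "b * (K - b) / (2 * (b + 1)) < K - b"
      proof -
        have pos: "0 < (K - b) * (b + 2)" using K True b by (intro mult_pos_pos) auto
        have "b * (K - b) < (K - b) * (2 * (b + 1))" using pos by (simp add: algebra_simps)
        thus ?thesis using b by (simp add: pos_divide_less_eq)
      qed
      finally show False using h[OF rp] True by simp
    next
      case False
      hence b0: "b = 0" using z by simp
      define \<rho> where "\<rho> = (K - a) / (2 * (a + 1))"
      have rp: "\<rho> > 0" using K b0 a by (simp add: \<rho>_def)
      have "(1 + \<rho>) * a = a + a * (K - a) / (2 * (a + 1))"
        by (simp add: \<rho>_def field_simps)
      also have "a * (K - a) / (2 * (a + 1)) < K - a"
      proof -
        have pos: "0 < (K - a) * (a + 2)" using K b0 a by (intro mult_pos_pos) auto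
        have "a * (K - a) < (K - a) * (2 * (a + 1))" using pos by (simp add: algebra_simps)
        thus ?thesis using a by (simp add: pos_divide_less_eq)
      qed
      finally show False using h[OF rp] b0 by simp
    qed
  qed
qed



lemma mfun_mabs_decomp:
  fixes X :: "complex^'n^'n"
  obtains V d where "unitary_mat V" "\<forall>i. d i \<ge> 0"
    "\<And>h. mfun h (mabs X) = V ** rdiag (h \<circ> (sqrt \<circ> d)) ** cadj V"
    "mabs X = V ** rdiag (sqrt \<circ> d) ** cadj V"
proof -
  obtain V d where V: "unitary_mat V" and H: "cadj X ** X = V ** rdiag d ** cadj V"
    and d: "\<forall>i. d i \<ge> 0" using psd_decomp by blast
  have m: "mabs X = V ** rdiag (sqrt \<circ> d) ** cadj V"
    unfolding mabs_def using mfun_eq[OF V H] .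
  show ?thesis using that[OF V d mfun_eq[OF V m] m] .
qed

lemma herm_mfun_mabs: "sf (mfun h (mabs X)) x y = sf (mfun h (mabs X)) y x"
proof -
  obtain V d where V: "unitary_mat V" and e: "mfun h (mabs X) = V ** rdiag (h \<circ> (sqrt \<circ> d)) ** cadj V"
    using mfun_mabs_decomp by metis
  have "cadj (mfun h (mabs X)) = mfun h (mabs X)" unfolding e by (rule herm_decomp_adj)
  thus ?thesis by (metis sf_adj)
qed

lemma mabs_sq_id: "mfun (\<lambda>t. (sqrt t)^2) (mabs X) = mabs X"
proof -
  obtain V d where d: "\<forall>i. d i \<ge> 0"
    and e: "mfun (\<lambda>t. (sqrt t)^2) (mabs X) = V ** rdiag ((\<lambda>t. (sqrt t)^2) \<circ> (sqrt \<circ> d)) ** cadj V"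
    and m: "mabs X = V ** rdiag (sqrt \<circ> d) ** cadj V"
    using mfun_mabs_decomp by metis
  have "(\<lambda>t. (sqrt t)^2) \<circ> (sqrt \<circ> d) = sqrt \<circ> d" using d by (auto simp: fun_eq_iff)
  thus ?thesis using e m by simp
qed

lemma mv_neg: "B *v (- u) = - (B *v (u::complex^'n))"
  using mv_scaleR[of B "-1" u] by simp

lemma opnorm_scale: "opnorm (c *\<^sub>R M) = \<bar>c\<bar> * opnorm M"
  unfolding opnorm_def scaleR_mv by (rule onorm_scaleR[OF mv_linear])

lemma sf_le_opnorm: "sf X p p \<le> opnorm X * (norm p)^2"
proof -
  have "sf X p p \<le> norm p * norm (X *v p)" unfolding sf_def by (rule norm_cauchy_schwarz)
  also have "\<dots> \<le> norm p * (opnorm X * norm p)" by (rule mult_left_mono[OF opnorm_bound]) simp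
  finally show ?thesis by (simp add: power2_eq_square mult_ac)
qed

lemma main_ineq:
  fixes T :: "complex^'n^'n" and f g :: "real \<Rightarrow> real"
  assumes fg: "\<And>t. t \<ge> 0 \<Longrightarrow> f t * g t = t"
  shows "opnorm T \<le> (1/2) *
           (opnorm (scaleR (1/2) (mfun (\<lambda>t. (f t)^2) (mabs T) + mfun (\<lambda>t. (g t)^2) (mabs (cadj T))) + ReM T)
          + opnorm (scaleR (1/2) (mfun (\<lambda>t. (f t)^2) (mabs T) + mfun (\<lambda>t. (g t)^2) (mabs (cadj T))) - ReM T))"
proof -
  define A where "A = mfun (\<lambda>t. (f t)^2) (mabs T)"
  define B where "B = mfun (\<lambda>t. (g t)^2) (mabs (cadj T))"
  define X where "X = (1/2) *\<^sub>R (A + B) + ReM T"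
  define Y where "Y = (1/2) *\<^sub>R (A + B) - ReM T"
  define \<Phi> where "\<Phi> = (\<lambda>v u. sf A v v + sf B u u + 2 * sf T u v)"
  have hA: "\<And>x y. sf A x y = sf A y x" unfolding A_def by (rule herm_mfun_mabs)
  have hB: "\<And>x y. sf B x y = sf B y x" unfolding B_def by (rule herm_mfun_mabs)
  have Phi_nn: "\<Phi> v u \<ge> 0" for v u
  proof -
    have "2 * Re (cinner (-u) (T *v v)) \<le> Re (cinner v (A *v v)) + Re (cinner (-u) (B *v (-u)))"
      unfolding A_def B_def by (rule mixed_schwarz[OF fg])
    thus ?thesis unfolding \<Phi>_def sf_def Re_cinner
      by (simp add: mv_neg inner_minus_left inner_minus_right)
  qed
  let ?x = "opnorm X" and ?y = "opnorm Y"
  have x0: "?x \<ge> 0" and y0: "?y \<ge> 0" unfolding opnorm_def by (simp_all add: onorm_pos_le mv_linear)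
  have bound: "norm (T *v v) \<le> (?x + ?y) / 2 * norm v" for v
  proof (cases "T *v v = 0")
    case True thus ?thesis using x0 y0 by simp
  next
    case False
    hence nT: "norm (T *v v) > 0" by simp
    define u where "u = (norm v / norm (T *v v)) *\<^sub>R (T *v v)"
    have nu: "norm u = norm v" using nT by (simp add: u_def)
    have t: "sf T u v = norm v * norm (T *v v)"
      using nT by (simp add: u_def sf_def power2_norm_eq_inner[symmetric] power2_eq_square)
    have "\<Phi> v (-u) \<ge> 0" by (rule Phi_nn)
    hence ab: "sf A v v + sf B u u \<ge> 2 * (norm v * norm (T *v v))"
      unfolding \<Phi>_def using t
      by (simp add: sf_def mv_neg inner_minus_left inner_minus_right)
    define p where "p = v + u"
    define q where "q = v - u"
    have vpq: "v = (1/2) *\<^sub>R (p + q)" "u = (1/2) *\<^sub>R (p - q)"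
    proof -
      have "p + q = 2 *\<^sub>R v" unfolding p_def q_def scaleR_2 by simp
      moreover have "p - q = 2 *\<^sub>R u" unfolding p_def q_def scaleR_2 by simp
      ultimately show "v = (1/2) *\<^sub>R (p + q)" "u = (1/2) *\<^sub>R (p - q)" by simp_all
    qed
    have Phi_vu: "\<Phi> v u \<ge> 4 * (norm v * norm (T *v v))" unfolding \<Phi>_def using ab t by simp
    have pq: "(norm p)^2 + (norm q)^2 = 4 * (norm v)^2"
    proof -
      have "(norm p)^2 + (norm q)^2 = 2 * (norm v)^2 + 2 * (norm u)^2"
        unfolding p_def q_def power2_norm_eq_inner
        by (simp add: inner_add_left inner_add_right inner_diff_left inner_diff_right inner_commute)
      thus ?thesis using nu by simp
    qed
    define \<alpha> where "\<alpha> = ?x * (norm p)^2 / 2"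
    define \<beta> where "\<beta> = ?y * (norm q)^2 / 2"
    have K: "4 * (norm v * norm (T *v v)) \<le> (1 + \<rho>) * \<alpha> + (1 + 1/\<rho>) * \<beta>" if rp: "\<rho> > 0" for \<rho>
    proof -
      define r where "r = sqrt \<rho>"
      have r: "r \<noteq> 0" "r^2 = \<rho>" using rp by (auto simp: r_def)
      have id: "\<Phi> v u + \<Phi> ((1/2) *\<^sub>R (r *\<^sub>R p - (1/r) *\<^sub>R q)) ((1/2) *\<^sub>R (r *\<^sub>R p + (1/r) *\<^sub>R q))
          = (1/2) * (1 + r^2) * sf X p p + (1/2) * (1 + 1/r^2) * sf Y q q"
        unfolding vpq \<Phi>_def X_def Y_def by (rule key_identity[OF hA hB r(1)])
      have "(1/2) * (1 + r^2) * sf X p p \<le> (1/2) * (1 + r^2) * (?x * (norm p)^2)"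
        by (rule mult_left_mono[OF sf_le_opnorm]) simp
      moreover have "(1/2) * (1 + 1/r^2) * sf Y q q \<le> (1/2) * (1 + 1/r^2) * (?y * (norm q)^2)"
        by (rule mult_left_mono[OF sf_le_opnorm]) simp
      moreover have "\<Phi> ((1/2) *\<^sub>R (r *\<^sub>R p - (1/r) *\<^sub>R q)) ((1/2) *\<^sub>R (r *\<^sub>R p + (1/r) *\<^sub>R q)) \<ge> 0"
        by (rule Phi_nn)
      ultimately have "\<Phi> v u \<le> (1 + \<rho>) * \<alpha> + (1 + 1/\<rho>) * \<beta>"
        using id r(2) unfolding \<alpha>_def \<beta>_def by (simp add: field_simps)
      thus ?thesis using Phi_vu by linarith
    qed
    have a0: "\<alpha> \<ge> 0" and b0: "\<beta> \<ge> 0" using x0 y0 by (simp_all add: \<alpha>_def \<beta>_def)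
    have "4 * (norm v * norm (T *v v)) \<le> \<alpha> + \<beta> + 2 * sqrt (\<alpha> * \<beta>)" by (rule RL[OF a0 b0 K])
    also have "2 * sqrt (\<alpha> * \<beta>) \<le> (?x * (norm q)^2 + ?y * (norm p)^2) / 2"
    proof -
      have eq: "\<alpha> * \<beta> = (?x * (norm q)^2 / 2) * (?y * (norm p)^2 / 2)" by (simp add: \<alpha>_def \<beta>_def)
      have "2 * sqrt (\<alpha> * \<beta>) \<le> ?x * (norm q)^2 / 2 + ?y * (norm p)^2 / 2"
        unfolding eq by (rule sqrt_amgm) (use x0 y0 in simp_all)
      thus ?thesis by simp
    qed
    finally have "4 * (norm v * norm (T *v v)) \<le> (?x + ?y) * ((norm p)^2 + (norm q)^2) / 2"
      by (simp add: \<alpha>_def \<beta>_def field_simps)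
    also have "\<dots> = 2 * (?x + ?y) * (norm v)^2" using pq by simp
    finally have "4 * (norm v * norm (T *v v)) \<le> 2 * (?x + ?y) * (norm v)^2" .
    moreover have "norm v > 0" using False by (cases "v = 0") (auto simp: matrix_vector_mult_def vec_eq_iff)
    ultimately have h1: "norm v * (4 * norm (T *v v)) \<le> norm v * (2 * (?x + ?y) * norm v)" and nv: "norm v > 0"
      by (simp_all add: power2_eq_square mult_ac)
    from h1 nv have "4 * norm (T *v v) \<le> 2 * (?x + ?y) * norm v" by (simp only: mult_le_cancel_left_pos)
    thus ?thesis by (simp add: algebra_simps)
  qed
  have "opnorm T \<le> (?x + ?y) / 2" by (rule opnorm_le[OF bound])
  thus ?thesis unfolding X_def Y_def A_def B_def by simp
qed


theorem corollary3p7: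
  fixes T :: "complex^'n^'n" and f g :: "real \<Rightarrow> real"
  assumes "continuous_on {0..} f" and "continuous_on {0..} g"
    and "\<And>t. t \<ge> 0 \<Longrightarrow> f t \<ge> 0" and "\<And>t. t \<ge> 0 \<Longrightarrow> g t \<ge> 0"
    and "\<And>t. t \<ge> 0 \<Longrightarrow> f t * g t = t"
  shows "opnorm T \<le> (1/2) *
           (opnorm (scaleR (1/2) (mfun (\<lambda>t. (f t)^2) (mabs T) + mfun (\<lambda>t. (g t)^2) (mabs (cadj T))) + ReM T)
          + opnorm (scaleR (1/2) (mfun (\<lambda>t. (f t)^2) (mabs T) + mfun (\<lambda>t. (g t)^2) (mabs (cadj T))) - ReM T))
    \<and> opnorm T \<le> (1/4) *
           (opnorm (mabs T + mabs (cadj T) + 2 *\<^sub>R ReM T)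
          + opnorm (mabs T + mabs (cadj T) - 2 *\<^sub>R ReM T))"
proof
  show "opnorm T \<le> (1/2) *
           (opnorm (scaleR (1/2) (mfun (\<lambda>t. (f t)^2) (mabs T) + mfun (\<lambda>t. (g t)^2) (mabs (cadj T))) + ReM T)
          + opnorm (scaleR (1/2) (mfun (\<lambda>t. (f t)^2) (mabs T) + mfun (\<lambda>t. (g t)^2) (mabs (cadj T))) - ReM T))"
    by (rule main_ineq) (rule assms(5))
next
  have fg: "\<And>t. t \<ge> 0 \<Longrightarrow> sqrt t * sqrt t = t" by simp
  have m: "opnorm T \<le> (1/2) *
           (opnorm (scaleR (1/2) (mabs T + mabs (cadj T)) + ReM T)
          + opnorm (scaleR (1/2) (mabs T + mabs (cadj T)) - ReM T))"
    using main_ineq[OF fg, of T] by (simp only: mabs_sq_id)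
  have e1: "scaleR (1/2) (mabs T + mabs (cadj T)) + ReM T = (1/2) *\<^sub>R (mabs T + mabs (cadj T) + 2 *\<^sub>R ReM T)"
    by (simp add: scaleR_add_right)
  have e2: "scaleR (1/2) (mabs T + mabs (cadj T)) - ReM T = (1/2) *\<^sub>R (mabs T + mabs (cadj T) - 2 *\<^sub>R ReM T)"
    by (simp add: scaleR_diff_right scaleR_add_right)
  show "opnorm T \<le> (1/4) *
           (opnorm (mabs T + mabs (cadj T) + 2 *\<^sub>R ReM T)
          + opnorm (mabs T + mabs (cadj T) - 2 *\<^sub>R ReM T))"
    using m unfolding e1 e2 opnorm_scale by simp
qed

end
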